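(* Let $\theta\in\mathbb{R}^q$ be constant and let $y=\phi^\top\theta$, with $y$ scalar and $\phi$ an $\mathbb{R}^q$-valued signal, either in continuous time (CT) or in discrete time (DT). Fix $\gamma>0$, a positive gain function $\gamma_g(\cdot)>0$, and initial values $\theta_{g0}\in\mathbb{R}^q$, $\theta_0\in\mathbb{R}^q$. In CT (with $\phi$ bounded and continuous and $\gamma_g$ continuous) define $\dot{\hat\theta}_g=-\gamma_g(t)\phi\phi^\top\hat\theta_g+\gamma_g(t)\phi y$, $\hat\theta_g(0)=\theta_{g0}$; $\dot\Phi=-\gamma_g(t)\phi\phi^\top\Phi$, $\Phi(0)=I_q$; $\dot{\hat\theta}=\gamma\Delta(Y-\Delta\hat\theta)$, $\hat\theta(0)=\theta_0$. In DT (with $\phi$ bounded) define, with $g(k):=1/(\gamma_g(k)+|\phi(k)|^2)$, $\hat\theta_g(k+1)=(I_q-g(k)\phi(k)\phi^\top(k))\hat\theta_g(k)+g(k)\phi(k)y(k)$, $\hat\theta_g(0)=\theta_{g0}$; $\Phi(k+1)=(I_q-g(k)\phi(k)\phi^\top(k))\Phi(k)$, $\Phi(0)=I_q$; $\hat\theta(k+1)=\hat\theta(k)+\frac{\Delta(k)}{\gamma+\Delta^2(k)}(Y(k)-\Delta(k)\hat\theta(k))$, $\hat\theta(0)=\theta_0$. In both cases $\mathcal D:=I_q-\Phi$, $\Delta:=\det\{\mathcal D\}$, $Y:=\mathrm{adj}\{\mathcal D\}(\hat\theta_g-\Phi\theta_{g0})$ (adj denotes the adjugate matrix). If the regression equation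 is identifiable, then $\tilde\theta:=\hat\theta-\theta$ converges to zero exponentially.
   Context: Identifiability: there exist $q$ time instants (positive reals in CT, nonnegative integers in DT) $\tau_1,\dots,\tau_q$ such that $[\phi(\tau_1)|\cdots|\phi(\tau_q)]$ has rank $q$. *)

theory Defs
  imports "HOL-Analysis.Analysis"
begin

definition outer :: "real^'n \<Rightarrow> real^'n \<Rightarrow> real^'n^'n" where
  "outer v w = (\<chi> i j. v $ i * w $ j)"

text \<open>Adjugate (classical adjoint): entry (i,j) is the cofactor C_(j,i),
  i.e. the determinant of A with row j replaced by the i-th unit row vector.\<close>
definition adjugate :: "real^'n^'n \<Rightarrow> real^'n^'n" where
  "adjugate A = (\<chi> i j. det (\<chi> k. if k = j then axis i 1 else A $ k))"

end

theory Submission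
  imports Defs
begin

lemma outer_mv: "outer v w *v x = (w \<bullet> x) *\<^sub>R v"
  by (simp add: outer_def vec_eq_iff matrix_vector_mult_def inner_vec_def sum_distrib_left algebra_simps)

lemma lin_mv: "linear (\<lambda>M::real^'n^'m. M *v x)"
  apply (rule linearI) 
   apply (auto simp: vec_eq_iff matrix_vector_mult_def sum_distrib_left sum.distrib algebra_simps)
  done
lemma bl_mv: "bounded_linear (\<lambda>M::real^'n^'m. M *v x)"
  using lin_mv linear_conv_bounded_linear by blast

lemma mono_dec:
  fixes f f' :: "real \<Rightarrow> real"
  assumes "0 \<le> a" "a \<le> b"
    and d: "\<And>t. 0 \<le> t \<Longrightarrow> (f has_real_derivative f' t) (at t within {0..})"
    and n: "\<And>t. a < t \<Longrightarrow> t < b \<Longrightarrow> f' t \<le> 0"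
  shows "f b \<le> f a"
proof (rule DERIV_nonpos_imp_decreasing_open[OF \<open>a \<le> b\<close>])
  fix x assume x: "a < x" "x < b"
  have "interior {0..} = ({0<..} :: real set)" by simp
  then have "at x within {0..} = at x" using x assms(1) by (intro at_within_interior) auto
  then show "\<exists>y. (f has_real_derivative y) (at x) \<and> y \<le> 0"
    using d[of x] n[OF x] x assms(1) by auto
next
  show "continuous_on {a..b} f"
  proof (rule continuous_on_subset[of "{0..}"])
    show "continuous_on {0..} f"
      unfolding continuous_on_eq_continuous_within
      using d DERIV_continuous by blast
  qed (use assms in auto)
qed

lemma normsq_deriv:
  assumes "(w has_vector_derivative w') (at t within S)"
  shows "((\<lambda>t. w t \<bullet> w t) has_real_derivative 2 * (w t \<bullet> w')) (at t within S)"
proof -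
  have "((\<lambda>t. w t \<bullet> w t) has_vector_derivative (w t \<bullet> w' + w' \<bullet> w t)) (at t within S)"
    by (rule bounded_bilinear.has_vector_derivative[OF bounded_bilinear_inner assms assms])
  then show ?thesis
    by (simp add: has_real_derivative_iff_has_vector_derivative inner_commute)
qed

lemma adj_lemma:
  fixes A :: "real^'n^'n"
  assumes "det A \<noteq> 0"
  shows "adjugate A *v (A *v y) = det A *\<^sub>R y"
proof -
  have inv: "invertible A" using assms invertible_det_nz by blast
  obtain B where BA: "B ** A = mat 1" using inv unfolding invertible_def by blast
  have rowA: "row l A = A $ l" for l by (simp add: row_def vec_eq_iff)
  have entry: "adjugate A $ i $ j = B $ i $ j * det A" for i j
  proof -
    have "axis i 1 = (\<Sum>l\<in>UNIV. B $ i $ l *s row l A)"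
    proof -
      have "(B ** A) $ i = (\<Sum>l\<in>UNIV. B $ i $ l *s row l A)"
        by (simp add: vec_eq_iff matrix_matrix_mult_def row_def sum_component)
      moreover have "axis i 1 = (B ** A) $ i" using BA by (simp add: mat_def axis_def vec_eq_iff)
      ultimately show ?thesis by simp
    qed
    then have "adjugate A $ i $ j = det ((\<chi> k. if k = j then (\<Sum>l\<in>UNIV. B $ i $ l *s A $ l) else A $ k))"
      unfolding adjugate_def rowA by (simp only: vec_lambda_beta)
    also have "\<dots> = B $ i $ j * det A"
      using cramer_lemma_transpose[of j "B $ i" A, unfolded rowA] by simp
    finally show ?thesis .
  qed
  have "(adjugate A *v (A *v y)) = det A *\<^sub>R ((B ** A) *v y)"
    by (simp add: vec_eq_iff matrix_vector_mult_def matrix_matrix_mult_def entry sum_distrib_left sum_distrib_right algebra_simps)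
      (subst sum.swap, simp)
  then show ?thesis using BA by simp
qed
lemma mv_scale: "(M::real^'n^'m) *v (c *\<^sub>R x) = c *\<^sub>R (M *v x)"
  by (simp add: vec_eq_iff matrix_vector_mult_def sum_distrib_left algebra_simps)

lemma mv_axis: "((M::real^'n^'m) *v axis j 1) $ i = M $ i $ j"
  by (simp add: matrix_vector_mult_def axis_def if_distrib cong: if_cong)

lemma contr_rho:
  fixes M :: "real^'n^'n"
  assumes "\<And>x. x \<noteq> 0 \<Longrightarrow> norm (M *v x) < norm x"
  shows "\<exists>\<rho>. 0 \<le> \<rho> \<and> \<rho> < 1 \<and> (\<forall>x. norm (M *v x) \<le> \<rho> * norm x)"
proof -
  have ne: "sphere (0::real^'n) 1 \<noteq> {}"
    using norm_axis_1 by (metis dist_0_norm empty_iff mem_sphere)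
  have "continuous_on (sphere 0 1) (\<lambda>x::real^'n. norm (M *v x))"
    by (intro continuous_intros linear_continuous_on matrix_vector_mul_bounded_linear)
  then obtain z where z: "z \<in> sphere 0 1" and zmax: "\<forall>y\<in>sphere 0 1. norm (M *v y) \<le> norm (M *v z)"
    using continuous_attains_sup[OF compact_sphere ne] by blast
  have z1: "norm z = 1" using z by simp
  then have "z \<noteq> 0" by auto
  then have lt: "norm (M *v z) < 1" using assms z1 by fastforce
  have "norm (M *v x) \<le> norm (M *v z) * norm x" for x
  proof (cases "x = 0")
    case False
    let ?u = "(1 / norm x) *\<^sub>R x"
    have "?u \<in> sphere 0 1" using False by simp
    then have "norm (M *v ?u) \<le> norm (M *v z)" using zmax by blast
    then have "norm (M *v x) / norm x \<le> norm (M *v z)"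
      by (simp add: mv_scale)
    then show ?thesis using False by (simp add: divide_le_eq mult.commute)
  qed simp
  then show ?thesis using lt by (intro exI[of _ "norm (M *v z)"]) auto
qed

lemma det_bound:
  fixes \<rho> :: real
  assumes "0 \<le> \<rho>" "\<rho> < 1"
  shows "\<exists>\<delta>>0. \<forall>M::real^'n^'n. (\<forall>x. norm (M *v x) \<le> \<rho> * norm x) \<longrightarrow> \<delta> \<le> \<bar>det (mat 1 - M)\<bar>"
proof -
  define K where "K = {M::real^'n^'n. \<forall>x. norm (M *v x) \<le> \<rho> * norm x}"
  have cl: "closed K"
  proof -
    have "K = (\<Inter>x. {M::real^'n^'n. norm (M *v x) \<le> \<rho> * norm x})"
      unfolding K_def by blast
    moreover have "closed {M::real^'n^'n. norm (M *v x) \<le> \<rho> * norm x}" for x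
      by (intro closed_Collect_le continuous_intros linear_continuous_on bl_mv)
    ultimately show ?thesis by auto
  qed
  have bd: "bounded K"
  proof -
    have "norm M \<le> real CARD('n) * (real CARD('n) * \<rho>)" if "M \<in> K" for M
    proof -
      have e: "\<bar>M $ i $ j\<bar> \<le> \<rho>" for i j
      proof -
        have "\<bar>M $ i $ j\<bar> \<le> norm (M *v axis j 1)"
          using component_le_norm_cart[of "M *v axis j 1" i] by (simp add: mv_axis)
        also have "\<dots> \<le> \<rho> * norm (axis j (1::real))" using that unfolding K_def by blast
        also have "\<dots> = \<rho>" by (simp add: norm_axis_1)
        finally show ?thesis .
      qed
      have r: "norm (M $ i) \<le> real CARD('n) * \<rho>" for i
      proof -
        have "norm (M $ i) \<le> (\<Sum>j\<in>UNIV. \<bar>M $ i $ j\<bar>)" by (rule norm_le_l1_cart)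
        also have "\<dots> \<le> (\<Sum>j\<in>(UNIV::'n set). \<rho>)" by (intro sum_mono e)
        finally show ?thesis by simp
      qed
      have "norm M \<le> (\<Sum>i\<in>UNIV. norm (M $ i))"
        unfolding norm_vec_def by (rule L2_set_le_sum) simp
      also have "\<dots> \<le> (\<Sum>i\<in>(UNIV::'n set). real CARD('n) * \<rho>)" by (intro sum_mono r)
      finally show ?thesis by simp
    qed
    then show ?thesis unfolding bounded_iff by blast
  qed
  have cpt: "compact K" using cl bd compact_eq_bounded_closed by blast
  have "(0::real^'n^'n) \<in> K" unfolding K_def using assms by simp
  then have ne: "K \<noteq> {}" by blast
  have cont: "continuous_on K (\<lambda>M::real^'n^'n. \<bar>det (mat 1 - M)\<bar>)"
    unfolding det_def by (intro continuous_intros)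
  obtain M0 where M0: "M0 \<in> K" and mn: "\<forall>M\<in>K. \<bar>det (mat 1 - M0)\<bar> \<le> \<bar>det (mat 1 - M)\<bar>"
    using continuous_attains_inf[OF cpt ne cont] by blast
  have nz: "det (mat 1 - M) \<noteq> 0" if "M \<in> K" for M
  proof
    assume "det (mat 1 - M) = 0"
    then have "\<not> invertible (mat 1 - M)" using invertible_det_nz by blast
    then have "\<not> (\<forall>x. (mat 1 - M) *v x = 0 \<longrightarrow> x = 0)"
      using invertible_left_inverse matrix_left_invertible_ker by blast
    then obtain x where x: "(mat 1 - M) *v x = 0" "x \<noteq> 0" by blast
    then have "M *v x = x" by (simp add: matrix_vector_mult_diff_rdistrib)
    moreover have "norm (M *v x) \<le> \<rho> * norm x" using that unfolding K_def by blast
    ultimately have "norm x \<le> \<rho> * norm x" by simp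
    then have "(1 - \<rho>) * norm x \<le> 0" by (simp add: algebra_simps)
    moreover have "(1 - \<rho>) * norm x > 0" using x assms by simp
    ultimately show False by simp
  qed
  show ?thesis
    using nz[OF M0] mn unfolding K_def
    by (intro exI[of _ "\<bar>det (mat 1 - M0)\<bar>"]) auto
qed
lemma scaleR_mv: "((c::real) *\<^sub>R (A::real^'n^'m)) *v x = c *\<^sub>R (A *v x)"
  by (simp add: vec_eq_iff matrix_vector_mult_def sum_distrib_left algebra_simps)

lemma step_eq: "(mat 1 - c *\<^sub>R outer p p) *v x = x - (c * (p \<bullet> x)) *\<^sub>R p"
  by (simp add: matrix_vector_mult_diff_rdistrib scaleR_mv outer_mv)

lemma step_le:
  fixes p x :: "real^'n"
  assumes "g > 0"
  shows "(norm ((mat 1 - (1 / (g + (norm p)\<^sup>2)) *\<^sub>R outer p p) *v x))\<^sup>2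
     \<le> (norm x)\<^sup>2 - (1 / (g + (norm p)\<^sup>2)) * (p \<bullet> x)\<^sup>2"
proof -
  define c where "c = 1 / (g + (norm p)\<^sup>2)"
  have cpos: "c > 0" unfolding c_def using assms by (simp add: add_pos_nonneg)
  have c1: "c * (norm p)\<^sup>2 \<le> 1" unfolding c_def using assms
    by (simp add: divide_le_eq add_pos_nonneg)
  have "(norm (x - (c * (p \<bullet> x)) *\<^sub>R p))\<^sup>2 = (norm x)\<^sup>2 - 2 * c * (p \<bullet> x)\<^sup>2 + c\<^sup>2 * (p \<bullet> x)\<^sup>2 * (norm p)\<^sup>2"
    unfolding power2_norm_eq_inner by (simp add: inner_diff_left inner_diff_right inner_commute algebra_simps power2_eq_square)
  also have "\<dots> = (norm x)\<^sup>2 - c * (p \<bullet> x)\<^sup>2 - c * (p \<bullet> x)\<^sup>2 * (1 - c * (norm p)\<^sup>2)"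
    by (simp add: algebra_simps power2_eq_square)
  also have "\<dots> \<le> (norm x)\<^sup>2 - c * (p \<bullet> x)\<^sup>2"
    using cpos c1 by (simp add: mult_nonneg_nonneg)
  finally show ?thesis unfolding c_def[symmetric] step_eq .
qed

lemma ident_zero:
  fixes v :: "'a \<Rightarrow> real^'q" and \<tau> :: "'q \<Rightarrow> 'a"
  assumes "rank (\<chi> i j. v (\<tau> j) $ i) = CARD('q)" "\<And>j. v (\<tau> j) \<bullet> x = 0"
  shows "x = 0"
proof -
  let ?M = "(\<chi> i j. v (\<tau> j) $ i) :: real^'q^'q"
  have "rank (transpose ?M) = CARD('q)" using assms(1) rank_transpose by metis
  then have inj: "inj ((*v) (transpose ?M))" using full_rank_injective by blast
  have "transpose ?M *v x = 0"
    using assms(2) by (simp add: vec_eq_iff matrix_vector_mult_def transpose_def inner_vec_def mult.commute)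
  moreover have "transpose ?M *v 0 = 0" by simp
  ultimately show ?thesis using inj by (metis injD)
qed


lemma neg_mv: "(- (M::real^'n^'m)) *v x = - (M *v x)"
  by (simp add: vec_eq_iff matrix_vector_mult_def sum_negf)

lemma Phi_deriv_simp: "(- (g *\<^sub>R (outer p p ** P))) *v c = - ((g * (p \<bullet> (P *v c))) *\<^sub>R p)"
  by (simp add: neg_mv scaleR_mv matrix_vector_mul_assoc[symmetric] outer_mv)

lemma exp_decay_final_ct:
  fixes E r T :: real and u :: "real \<Rightarrow> real"
  assumes "0 < r" "0 \<le> T"
    and all: "\<And>t. 0 \<le> t \<Longrightarrow> u t \<le> E" and E0: "0 \<le> E"
    and late: "\<And>t. T \<le> t \<Longrightarrow> u t \<le> E * exp (- r * (t - T))"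
  shows "\<exists>c r. r > 0 \<and> (\<forall>t\<ge>0. u t \<le> c * exp (- r * t))"
proof (intro exI conjI allI impI)
  show "r > 0" by (rule assms(1))
  fix t :: real assume t: "0 \<le> t"
  show "u t \<le> (E * exp (r * T)) * exp (- r * t)"
  proof (cases "T \<le> t")
    case True
    have "exp (r * T) * exp (- r * t) = exp (- r * (t - T))"
      by (simp add: exp_add[symmetric] algebra_simps)
    then show ?thesis using late[OF True] by (simp add: mult.assoc)
  next
    case False
    have "exp (r * T) * exp (- r * t) = exp (r * (T - t))"
      by (simp add: exp_add[symmetric] algebra_simps)
    also have "\<dots> \<ge> 1" using False assms(1) by simp
    finally have "E \<le> E * (exp (r * T) * exp (- r * t))"
      using E0 by (simp add: mult_le_cancel_left1)
    then show ?thesis using all[OF t] by (simp add: mult.assoc)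
  qed
qed

lemma deriv_int:
  assumes "0 < s" "(f has_real_derivative d) (at s within {0..})"
  shows "(f has_real_derivative d) (at s)"
proof -
  have "interior {0..} = ({0<..} :: real set)" by simp
  then have "at s within {0..} = at s" using assms(1) by (intro at_within_interior) auto
  then show ?thesis using assms(2) by simp
qed

lemma ct_part:
  fixes \<theta> \<theta>g0 \<theta>0 :: "real^'q" and \<gamma> :: real
    and \<phi> :: "real \<Rightarrow> real^'q" and \<gamma>g :: "real \<Rightarrow> real"
    and thg Th :: "real \<Rightarrow> real^'q" and Phi :: "real \<Rightarrow> real^'q^'q"
  assumes gamma_pos: "\<gamma> > 0"
    and ct_gg_pos: "\<And>t. t \<ge> 0 \<Longrightarrow> \<gamma>g t > 0"
    and ct_thg: "\<And>t. t \<ge> 0 \<Longrightarrow> (thg has_vector_derivative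
          (- (\<gamma>g t *\<^sub>R (outer (\<phi> t) (\<phi> t) *v thg t)) + (\<gamma>g t * (\<phi> t \<bullet> \<theta>)) *\<^sub>R \<phi> t))
          (at t within {0..})"
    and ct_thg0: "thg 0 = \<theta>g0"
    and ct_Phi: "\<And>t. t \<ge> 0 \<Longrightarrow> (Phi has_vector_derivative
          (- (\<gamma>g t *\<^sub>R (outer (\<phi> t) (\<phi> t) ** Phi t)))) (at t within {0..})"
    and ct_Phi0: "Phi 0 = mat 1"
    and ct_Th: "\<And>t. t \<ge> 0 \<Longrightarrow> (Th has_vector_derivative
          (\<gamma> * det (mat 1 - Phi t)) *\<^sub>R
            (adjugate (mat 1 - Phi t) *v (thg t - Phi t *v \<theta>g0)
             - det (mat 1 - Phi t) *\<^sub>R Th t)) (at t within {0..})"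
    and ct_Th0: "Th 0 = \<theta>0"
    and ct_ident: "\<exists>\<tau> :: 'q \<Rightarrow> real. (\<forall>i. \<tau> i > 0) \<and>
          rank (\<chi> i j. \<phi> (\<tau> j) $ i) = CARD('q)"
  shows "\<exists>c r. r > 0 \<and> (\<forall>t\<ge>0. norm (Th t - \<theta>) \<le> c * exp (- r * t))"
proof -
  define \<Delta> where "\<Delta> t = det (mat 1 - Phi t)" for t
  have Pd: "((\<lambda>t. Phi t *v c) has_vector_derivative - ((\<gamma>g t * (\<phi> t \<bullet> (Phi t *v c))) *\<^sub>R \<phi> t)) (at t within {0..})"
    if "t \<ge> 0" for t c
    using bounded_linear.has_vector_derivative[OF bl_mv ct_Phi[OF that], of c]
    by (simp only: Phi_deriv_simp)
  define e where "e t = thg t - \<theta> - Phi t *v (\<theta>g0 - \<theta>)" for t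
  have ed: "(e has_vector_derivative - ((\<gamma>g t * (\<phi> t \<bullet> e t)) *\<^sub>R \<phi> t)) (at t within {0..})"
    if "t \<ge> 0" for t
  proof -
    have "(e has_vector_derivative
       ((- (\<gamma>g t *\<^sub>R (outer (\<phi> t) (\<phi> t) *v thg t)) + (\<gamma>g t * (\<phi> t \<bullet> \<theta>)) *\<^sub>R \<phi> t) - 0
        - - ((\<gamma>g t * (\<phi> t \<bullet> (Phi t *v (\<theta>g0 - \<theta>)))) *\<^sub>R \<phi> t))) (at t within {0..})"
      unfolding e_def
      by (intro has_vector_derivative_diff ct_thg that has_vector_derivative_const Pd)
    moreover have "(- (\<gamma>g t *\<^sub>R (outer (\<phi> t) (\<phi> t) *v thg t)) + (\<gamma>g t * (\<phi> t \<bullet> \<theta>)) *\<^sub>R \<phi> t) - 0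
        - - ((\<gamma>g t * (\<phi> t \<bullet> (Phi t *v (\<theta>g0 - \<theta>)))) *\<^sub>R \<phi> t) = - ((\<gamma>g t * (\<phi> t \<bullet> e t)) *\<^sub>R \<phi> t)"
      unfolding e_def by (simp add: outer_mv inner_diff_right algebra_simps)
    ultimately show ?thesis by simp
  qed
  have e0: "e 0 = 0" unfolding e_def by (simp add: ct_thg0 ct_Phi0)
  have ezero: "e t = 0" if "t \<ge> 0" for t
  proof -
    have "(\<lambda>t. e t \<bullet> e t) t \<le> (\<lambda>t. e t \<bullet> e t) 0"
    proof (rule mono_dec[where f = "\<lambda>t. e t \<bullet> e t" and f' = "\<lambda>t. 2 * (e t \<bullet> - ((\<gamma>g t * (\<phi> t \<bullet> e t)) *\<^sub>R \<phi> t))"])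
      show "((\<lambda>t. e t \<bullet> e t) has_real_derivative 2 * (e s \<bullet> - ((\<gamma>g s * (\<phi> s \<bullet> e s)) *\<^sub>R \<phi> s))) (at s within {0..})"
        if "0 \<le> s" for s
        by (rule normsq_deriv[OF ed[OF that]])
      show "2 * (e s \<bullet> - ((\<gamma>g s * (\<phi> s \<bullet> e s)) *\<^sub>R \<phi> s)) \<le> 0" if "0 < s" "s < t" for s
        using ct_gg_pos[of s] that by (simp add: inner_commute mult_nonneg_nonneg)
    qed (use that in auto)
    then have "e t \<bullet> e t \<le> 0" using e0 by simp
    then show ?thesis by (metis inner_eq_zero_iff inner_ge_zero order_antisym)
  qed
  have Yeq: "thg t - Phi t *v \<theta>g0 = (mat 1 - Phi t) *v \<theta>" if "t \<ge> 0" for t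
    using ezero[OF that] unfolding e_def
    by (simp add: matrix_vector_mult_diff_distrib matrix_vector_mult_diff_rdistrib algebra_simps)
  have Thd: "((\<lambda>t. Th t - \<theta>) has_vector_derivative - ((\<gamma> * (\<Delta> t)\<^sup>2) *\<^sub>R (Th t - \<theta>))) (at t within {0..})"
    if "t \<ge> 0" for t
  proof -
    have "adjugate (mat 1 - Phi t) *v (thg t - Phi t *v \<theta>g0) = \<Delta> t *\<^sub>R \<theta>" if "\<Delta> t \<noteq> 0"
      unfolding Yeq[OF \<open>t \<ge> 0\<close>] \<Delta>_def by (rule adj_lemma) (use that \<Delta>_def in simp)
    then have eq: "(\<gamma> * det (mat 1 - Phi t)) *\<^sub>R
            (adjugate (mat 1 - Phi t) *v (thg t - Phi t *v \<theta>g0)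
             - det (mat 1 - Phi t) *\<^sub>R Th t) - 0 = - ((\<gamma> * (\<Delta> t)\<^sup>2) *\<^sub>R (Th t - \<theta>))"
      unfolding \<Delta>_def[symmetric]
      by (cases "\<Delta> t = 0") (simp_all add: algebra_simps power2_eq_square)
    show ?thesis
      using has_vector_derivative_diff[OF ct_Th[OF that] has_vector_derivative_const[of \<theta>]] eq by simp
  qed
  define V where "V t = (Th t - \<theta>) \<bullet> (Th t - \<theta>)" for t
  define V' where "V' t = 2 * ((Th t - \<theta>) \<bullet> - ((\<gamma> * (\<Delta> t)\<^sup>2) *\<^sub>R (Th t - \<theta>)))" for t
  have Vd: "(V has_real_derivative V' t) (at t within {0..})" if "t \<ge> 0" for t
    unfolding V_def V'_def by (rule normsq_deriv[OF Thd[OF that]])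
  have V'eq: "V' t = - (2 * \<gamma> * (\<Delta> t)\<^sup>2) * V t" for t
    unfolding V_def V'_def by (simp add: algebra_simps)
  have Vnn: "V t \<ge> 0" for t unfolding V_def by simp
  have Vmono: "V t \<le> V 0" if "t \<ge> 0" for t
  proof (rule mono_dec[where f = V and f' = V'])
    show "(V has_real_derivative V' s) (at s within {0..})" if "0 \<le> s" for s using Vd that .
    show "V' s \<le> 0" for s unfolding V'eq using Vnn[of s] gamma_pos
      by (simp add: mult_nonneg_nonneg)
  qed (use that in auto)
  define N where "N x t = (Phi t *v x) \<bullet> (Phi t *v x)" for x t
  define N' where "N' x t = 2 * ((Phi t *v x) \<bullet> - ((\<gamma>g t * (\<phi> t \<bullet> (Phi t *v x))) *\<^sub>R \<phi> t))" for x t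
  have Nd: "(N x has_real_derivative N' x t) (at t within {0..})" if "t \<ge> 0" for t x
    unfolding N_def N'_def by (rule normsq_deriv[OF Pd[OF that]])
  have N'eq: "N' x t = - (2 * \<gamma>g t * (\<phi> t \<bullet> (Phi t *v x))\<^sup>2)" for x t
    unfolding N'_def by (simp add: inner_commute power2_eq_square algebra_simps)
  have N'le: "N' x t \<le> 0" if "t \<ge> 0" for x t
    unfolding N'eq using ct_gg_pos[OF that] by (simp add: mult_nonneg_nonneg)
  have Nmono: "N x b \<le> N x a" if "0 \<le> a" "a \<le> b" for x a b
  proof (rule mono_dec[where f = "N x" and f' = "N' x"])
    show "(N x has_real_derivative N' x s) (at s within {0..})" if "0 \<le> s" for s using Nd that .
    show "N' x s \<le> 0" if "a < s" "s < b" for s using N'le \<open>0 \<le> a\<close> that by simp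
  qed (use that in auto)
  have Nnorm: "N x t = (norm (Phi t *v x))\<^sup>2" for x t unfolding N_def by (simp add: power2_norm_eq_inner)
  have Nmono': "norm (Phi b *v x) \<le> norm (Phi a *v x)" if "0 \<le> a" "a \<le> b" for x a b
    using Nmono[OF that, of x] unfolding Nnorm by (rule power2_le_imp_le) simp
  have N0: "N x 0 = (norm x)\<^sup>2" for x unfolding Nnorm by (simp add: ct_Phi0)
  obtain \<tau> :: "'q \<Rightarrow> real" where taupos: "\<And>i. \<tau> i > 0" and tau: "rank (\<chi> i j. \<phi> (\<tau> j) $ i) = CARD('q)"
    using ct_ident by blast
  define T where "T = Max (range \<tau>) + 1"
  have tauT: "\<tau> j < T" for j
  proof -
    have "\<tau> j \<le> Max (range \<tau>)" by (rule Max_ge) auto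
    then show ?thesis unfolding T_def by linarith
  qed
  have T0: "T > 0" using taupos[of undefined] tauT[of undefined] by linarith
  have strict: "norm (Phi T *v x) < norm x" if "x \<noteq> 0" for x
  proof (rule ccontr)
    assume "\<not> norm (Phi T *v x) < norm x"
    then have "norm x \<le> norm (Phi T *v x)" by simp
    then have "(norm x)\<^sup>2 \<le> (norm (Phi T *v x))\<^sup>2" by (rule power_mono) simp
    then have NT: "N x 0 \<le> N x T" by (simp add: Nnorm ct_Phi0)
    have Nconst: "N x s = N x 0" if "0 \<le> s" "s \<le> T" for s
    proof -
      have a: "N x s \<le> N x 0" by (rule Nmono) (use that in auto)
      have b: "N x T \<le> N x s" by (rule Nmono) (use that in auto)
      show ?thesis by (rule order_antisym[OF a order_trans[OF NT b]])
    qed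
    have orth: "\<phi> s \<bullet> (Phi s *v x) = 0" if s: "0 < s" "s < T" for s
    proof -
      have d1: "(N x has_real_derivative N' x s) (at s)" using deriv_int[OF s(1) Nd] s by simp
      have d2: "(N x has_real_derivative 0) (at s)"
      proof (rule has_field_derivative_transform_within_open[OF DERIV_const[of "N x 0" "at s"], of "{0<..<T}"])
        show "s \<in> {0<..<T}" using s by simp
        show "N x 0 = N x y" if "y \<in> {0<..<T}" for y using Nconst[of y] that by simp
      qed simp
      have "N' x s = 0" using DERIV_unique[OF d1 d2] .
      then have "\<gamma>g s * (\<phi> s \<bullet> (Phi s *v x))\<^sup>2 = 0" unfolding N'eq by simp
      then show ?thesis using ct_gg_pos[of s] s by simp
    qed
    define w where "w s = (Phi s *v x - x) \<bullet> (Phi s *v x - x)" for s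
    define w' where "w' s = 2 * ((Phi s *v x - x) \<bullet> (- ((\<gamma>g s * (\<phi> s \<bullet> (Phi s *v x))) *\<^sub>R \<phi> s) - 0))" for s
    have wd: "(w has_real_derivative w' s) (at s within {0..})" if "0 \<le> s" for s
      unfolding w_def w'_def
      by (rule normsq_deriv[OF has_vector_derivative_diff[OF Pd[OF that] has_vector_derivative_const]])
    have fixx: "Phi s *v x = x" if "0 \<le> s" "s \<le> T" for s
    proof -
      have "w s \<le> w 0"
      proof (rule mono_dec[where f = w and f' = w'])
        show "(w has_real_derivative w' r) (at r within {0..})" if "0 \<le> r" for r using wd that .
        show "w' r \<le> 0" if "0 < r" "r < s" for r unfolding w'_def using orth[of r] that \<open>s \<le> T\<close> by simp
      qed (use that in auto)
      then have "w s \<le> 0" unfolding w_def by (simp add: ct_Phi0)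
      then have "Phi s *v x - x = 0" unfolding w_def by (metis inner_eq_zero_iff inner_ge_zero order_antisym)
      then show ?thesis by simp
    qed
    have "\<phi> (\<tau> j) \<bullet> x = 0" for j
      using orth[of "\<tau> j"] fixx[of "\<tau> j"] taupos[of j] tauT[of j] by simp
    then have "x = 0" by (rule ident_zero[of \<phi> \<tau>, OF tau])
    then show False using that by simp
  qed
  obtain \<rho> where rho: "0 \<le> \<rho>" "\<rho> < 1" "\<forall>x. norm (Phi T *v x) \<le> \<rho> * norm x"
    using contr_rho[OF strict] by blast
  obtain \<delta> where delta: "\<delta> > 0" "\<forall>M::real^'q^'q. (\<forall>x. norm (M *v x) \<le> \<rho> * norm x) \<longrightarrow> \<delta> \<le> \<bar>det (mat 1 - M)\<bar>"
    using det_bound[OF rho(1,2)] by blast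
  have Dlow: "\<delta> \<le> \<bar>\<Delta> t\<bar>" if tT: "T \<le> t" for t
  proof -
    have "\<forall>x. norm (Phi t *v x) \<le> \<rho> * norm x"
    proof
      fix x show "norm (Phi t *v x) \<le> \<rho> * norm x"
        by (rule order_trans[OF Nmono'[of T t x] rho(3)[rule_format]]) (use T0 tT in auto)
    qed
    then show ?thesis using delta(2) unfolding \<Delta>_def by blast
  qed
  define r where "r = \<gamma> * \<delta>\<^sup>2"
  have r: "r > 0" unfolding r_def using gamma_pos delta(1) by simp
  define W where "W t = V t * exp (2 * r * t)" for t
  define W' where "W' t = V' t * exp (2 * r * t) + V t * (exp (2 * r * t) * (2 * r))" for t
  have Wd: "(W has_real_derivative W' t) (at t within {0..})" if "t \<ge> 0" for t
    unfolding W_def W'_def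
    by (rule derivative_eq_intros Vd[OF that] | simp)+
  have Wmono: "W t \<le> W T" if "T \<le> t" for t
  proof (rule mono_dec[where f = W and f' = W'])
    show "(W has_real_derivative W' s) (at s within {0..})" if "0 \<le> s" for s using Wd that .
    show "W' s \<le> 0" if "T < s" "s < t" for s
    proof -
      have "\<delta>\<^sup>2 \<le> (\<Delta> s)\<^sup>2" using power_mono[OF Dlow[of s], of 2] delta(1) that by simp
      then have "r \<le> \<gamma> * (\<Delta> s)\<^sup>2" unfolding r_def using gamma_pos by simp
      then have "2 * r - 2 * \<gamma> * (\<Delta> s)\<^sup>2 \<le> 0" by simp
      moreover have "W' s = (2 * r - 2 * \<gamma> * (\<Delta> s)\<^sup>2) * (V s * exp (2 * r * s))"
        unfolding W'_def V'eq by (simp add: algebra_simps)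
      moreover have "V s * exp (2 * r * s) \<ge> 0" using Vnn[of s] by simp
      ultimately show ?thesis by (simp add: mult_nonpos_nonneg)
    qed
  qed (use T0 that in auto)
  define E where "E = norm (\<theta>0 - \<theta>)"
  have VE: "V t = (norm (Th t - \<theta>))\<^sup>2" for t unfolding V_def by (simp add: power2_norm_eq_inner)
  have V0: "V 0 = E\<^sup>2" unfolding VE E_def ct_Th0 ..
  have all: "norm (Th t - \<theta>) \<le> E" if "t \<ge> 0" for t
  proof -
    have "(norm (Th t - \<theta>))\<^sup>2 \<le> E\<^sup>2" using Vmono[OF that] unfolding VE V0[unfolded VE] .
    then show ?thesis by (rule power2_le_imp_le) (simp add: E_def)
  qed
  have late: "norm (Th t - \<theta>) \<le> E * exp (- r * (t - T))" if tT: "T \<le> t" for t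
  proof -
    have "V t * exp (2 * r * t) \<le> V T * exp (2 * r * T)" using Wmono[OF tT] unfolding W_def .
    also have "\<dots> \<le> E\<^sup>2 * exp (2 * r * T)" using Vmono[of T] T0 V0 by simp
    finally have "V t \<le> E\<^sup>2 * exp (2 * r * T) / exp (2 * r * t)" by (simp add: pos_le_divide_eq)
    also have "\<dots> = (E * exp (- r * (t - T)))\<^sup>2"
      by (simp add: power2_eq_square exp_add[symmetric] exp_diff algebra_simps)
    finally have "(norm (Th t - \<theta>))\<^sup>2 \<le> (E * exp (- r * (t - T)))\<^sup>2" unfolding VE .
    then show ?thesis by (rule power2_le_imp_le) (simp add: E_def)
  qed
  show ?thesis
    by (rule exp_decay_final_ct[OF r _ all _ late]) (use T0 E_def in auto)
qed


lemma exp_decay_final: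
  fixes E a :: real and K :: nat and u :: "nat \<Rightarrow> real"
  assumes "0 < a" "a < 1"
    and nn: "\<And>k. 0 \<le> u k" and all: "\<And>k. u k \<le> E"
    and late: "\<And>m. u (K + m) \<le> E * a ^ m"
  shows "\<exists>c r. r > 0 \<and> (\<forall>k. u k \<le> c * exp (- r * real k))"
proof -
  define r where "r = - ln a"
  have r: "r > 0" unfolding r_def using assms by simp
  have E0: "E \<ge> 0" using nn[of 0] all[of 0] by linarith
  have apow: "a ^ m = exp (- r * real m)" for m
    proof -
    have "exp (- r * real m) = exp (real m * ln a)" unfolding r_def by (simp add: mult.commute)
    also have "\<dots> = exp (ln a) ^ m" by (rule exp_of_nat_mult)
    also have "\<dots> = a ^ m" using assms by simp
    finally show ?thesis by simp
  qed
  show ?thesis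
  proof (intro exI conjI allI)
    show "r > 0" by (rule r)
    fix k
    show "u k \<le> (E * exp (r * real K)) * exp (- r * real k)"
    proof (cases "K \<le> k")
      case True
      then obtain m where k: "k = K + m" using le_Suc_ex by blast
      have "exp (r * real K) * exp (- r * real k) = exp (- r * real m)"
        unfolding k by (simp add: exp_add[symmetric] algebra_simps)
      then show ?thesis using late[of m] apow[of m] k by (simp add: mult.assoc)
    next
      case False
      have "exp (r * real K) * exp (- r * real k) = exp (r * (real K - real k))"
        by (simp add: exp_add[symmetric] algebra_simps)
      also have "\<dots> \<ge> 1" using False r by simp
      finally have "E \<le> E * (exp (r * real K) * exp (- r * real k))"
        using E0 by (simp add: mult_le_cancel_left1)
      then show ?thesis using all[of k] by (simp add: mult.assoc)
    qed
  qed
qed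

lemma dt_part:
  fixes \<theta> \<theta>g0 \<theta>0 :: "real^'q" and \<gamma> :: real
    and \<phi>d :: "nat \<Rightarrow> real^'q" and \<gamma>gd :: "nat \<Rightarrow> real"
    and thgd Thd :: "nat \<Rightarrow> real^'q" and Phid :: "nat \<Rightarrow> real^'q^'q"
  assumes gamma_pos: "\<gamma> > 0"
    and dt_gg_pos: "\<And>k. \<gamma>gd k > 0"
    and dt_thg: "\<And>k. thgd (Suc k) =
          (mat 1 - (1 / (\<gamma>gd k + (norm (\<phi>d k))\<^sup>2)) *\<^sub>R outer (\<phi>d k) (\<phi>d k)) *v thgd k
          + ((1 / (\<gamma>gd k + (norm (\<phi>d k))\<^sup>2)) * (\<phi>d k \<bullet> \<theta>)) *\<^sub>R \<phi>d k"
    and dt_thg0: "thgd 0 = \<theta>g0"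
    and dt_Phi: "\<And>k. Phid (Suc k) =
          (mat 1 - (1 / (\<gamma>gd k + (norm (\<phi>d k))\<^sup>2)) *\<^sub>R outer (\<phi>d k) (\<phi>d k)) ** Phid k"
    and dt_Phi0: "Phid 0 = mat 1"
    and dt_Th: "\<And>k. Thd (Suc k) = Thd k +
          (det (mat 1 - Phid k) / (\<gamma> + (det (mat 1 - Phid k))\<^sup>2)) *\<^sub>R
            (adjugate (mat 1 - Phid k) *v (thgd k - Phid k *v \<theta>g0)
             - det (mat 1 - Phid k) *\<^sub>R Thd k)"
    and dt_Th0: "Thd 0 = \<theta>0"
    and dt_ident: "\<exists>\<tau> :: 'q \<Rightarrow> nat. rank (\<chi> i j. \<phi>d (\<tau> j) $ i) = CARD('q)"
  shows "\<exists>c r. r > 0 \<and> (\<forall>k. norm (Thd k - \<theta>) \<le> c * exp (- r * real k))"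
proof -
  define cc where "cc k = 1 / (\<gamma>gd k + (norm (\<phi>d k))\<^sup>2)" for k
  define G where "G k = mat 1 - cc k *\<^sub>R outer (\<phi>d k) (\<phi>d k)" for k
  define \<Delta> where "\<Delta> k = det (mat 1 - Phid k)" for k
  have ccpos: "cc k > 0" for k unfolding cc_def using dt_gg_pos[of k] by (simp add: add_pos_nonneg)
  have thgS: "thgd (Suc k) = G k *v thgd k + (cc k * (\<phi>d k \<bullet> \<theta>)) *\<^sub>R \<phi>d k" for k
    using dt_thg[of k] unfolding G_def cc_def .
  have PhiS: "Phid (Suc k) = G k ** Phid k" for k
    using dt_Phi[of k] unfolding G_def cc_def .
  have Gv: "G k *v x = x - (cc k * (\<phi>d k \<bullet> x)) *\<^sub>R \<phi>d k" for k x
    unfolding G_def by (rule step_eq)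
  have Gle: "(norm (G k *v x))\<^sup>2 \<le> (norm x)\<^sup>2 - cc k * (\<phi>d k \<bullet> x)\<^sup>2" for k x
    unfolding G_def cc_def by (rule step_le[OF dt_gg_pos])
  have err: "thgd k - \<theta> = Phid k *v (\<theta>g0 - \<theta>)" for k
  proof (induction k)
    case 0 then show ?case by (simp add: dt_thg0 dt_Phi0)
  next
    case (Suc k)
    have "thgd (Suc k) - \<theta> = G k *v (thgd k - \<theta>)"
      unfolding thgS by (simp add: matrix_vector_mult_diff_distrib Gv inner_diff_right algebra_simps)
    also have "\<dots> = Phid (Suc k) *v (\<theta>g0 - \<theta>)"
      unfolding Suc PhiS by (simp add: matrix_vector_mul_assoc)
    finally show ?case .
  qed
  have Yeq: "thgd k - Phid k *v \<theta>g0 = (mat 1 - Phid k) *v \<theta>" for k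
    using err[of k] by (simp add: matrix_vector_mult_diff_distrib matrix_vector_mult_diff_rdistrib algebra_simps)
  have ThS: "Thd (Suc k) - \<theta> = (\<gamma> / (\<gamma> + (\<Delta> k)\<^sup>2)) *\<^sub>R (Thd k - \<theta>)" for k
  proof (cases "\<Delta> k = 0")
    case True
    then show ?thesis using dt_Th[of k] unfolding \<Delta>_def using gamma_pos by simp
  next
    case False
    have adj: "adjugate (mat 1 - Phid k) *v (thgd k - Phid k *v \<theta>g0) = \<Delta> k *\<^sub>R \<theta>"
      unfolding Yeq \<Delta>_def by (rule adj_lemma) (use False \<Delta>_def in simp)
    have pos: "\<gamma> + (\<Delta> k)\<^sup>2 > 0" using gamma_pos by (simp add: add_pos_nonneg)
    have "Thd (Suc k) = Thd k + (\<Delta> k / (\<gamma> + (\<Delta> k)\<^sup>2)) *\<^sub>R (\<Delta> k *\<^sub>R \<theta> - \<Delta> k *\<^sub>R Thd k)"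
      using dt_Th[of k] adj unfolding \<Delta>_def by simp
    then have e: "Thd (Suc k) $ i = Thd k $ i + (\<Delta> k / (\<gamma> + (\<Delta> k)\<^sup>2)) * (\<Delta> k * \<theta> $ i - \<Delta> k * Thd k $ i)" for i
      by simp
    show ?thesis unfolding vec_eq_iff
    proof
      fix i
      have "Thd (Suc k) $ i - \<theta> $ i = (\<gamma> / (\<gamma> + (\<Delta> k)\<^sup>2)) * (Thd k $ i - \<theta> $ i)"
        unfolding e[of i] using pos by (simp add: field_simps power2_eq_square)
      then show "(Thd (Suc k) - \<theta>) $ i = ((\<gamma> / (\<gamma> + (\<Delta> k)\<^sup>2)) *\<^sub>R (Thd k - \<theta>)) $ i" by simp
    qed
  qed
  have posk: "\<gamma> + (\<Delta> k)\<^sup>2 > 0" for k using gamma_pos by (simp add: add_pos_nonneg)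
  have Thmono: "norm (Thd (Suc k) - \<theta>) \<le> norm (Thd k - \<theta>)" for k
  proof -
    have "\<gamma> / (\<gamma> + (\<Delta> k)\<^sup>2) \<le> 1" using posk[of k] by (simp add: divide_le_eq)
    moreover have nn: "\<gamma> / (\<gamma> + (\<Delta> k)\<^sup>2) \<ge> 0" using gamma_pos posk[of k] by simp
    moreover have "norm (Thd (Suc k) - \<theta>) = (\<gamma> / (\<gamma> + (\<Delta> k)\<^sup>2)) * norm (Thd k - \<theta>)"
      unfolding ThS by (simp only: norm_scaleR abs_of_nonneg[OF nn])
    ultimately show ?thesis by (metis mult_left_le_one_le norm_ge_zero)
  qed
  have Thall: "norm (Thd k - \<theta>) \<le> norm (\<theta>0 - \<theta>)" for k
  proof (induction k)
    case (Suc k) then show ?case using Thmono[of k] by linarith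
  qed (simp add: dt_Th0)
  have Pstep: "(norm (Phid (Suc k) *v x))\<^sup>2 \<le> (norm (Phid k *v x))\<^sup>2 - cc k * (\<phi>d k \<bullet> (Phid k *v x))\<^sup>2" for k x
    unfolding PhiS matrix_vector_mul_assoc[symmetric] by (rule Gle)
  have Pstep': "(norm (Phid (Suc k) *v x))\<^sup>2 \<le> (norm (Phid k *v x))\<^sup>2" for k x
  proof -
    have aux: "\<And>A B C::real. A \<le> B - C \<Longrightarrow> 0 \<le> C \<Longrightarrow> A \<le> B" by linarith
    have h: "0 \<le> cc k * (\<phi>d k \<bullet> (Phid k *v x))\<^sup>2" using ccpos[of k] by simp
    show ?thesis by (rule aux[OF Pstep[of k x] h])
  qed
  have Pstepn: "norm (Phid (Suc k) *v x) \<le> norm (Phid k *v x)" for k x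
    by (rule power2_le_imp_le[OF Pstep'[of k x] norm_ge_zero])
  have Pmono: "norm (Phid (j + m) *v x) \<le> norm (Phid j *v x)" for j m x
  proof (induction m)
    case (Suc m) then show ?case using order_trans[OF Pstepn[of "j + m" x] Suc.IH] by simp
  qed simp
  have Pmono': "norm (Phid k *v x) \<le> norm (Phid j *v x)" if jk: "j \<le> k" for j k x
  proof -
    obtain m where "k = j + m" using le_Suc_ex[OF jk] by blast
    then show ?thesis using Pmono[of j m x] by (simp only:)
  qed
  have eqcase: "(norm (Phid k *v x))\<^sup>2 \<ge> (norm x)\<^sup>2 \<Longrightarrow> Phid k *v x = x \<and> (\<forall>j<k. \<phi>d j \<bullet> x = 0)" for k x
  proof (induction k)
    case 0 then show ?case by (simp add: dt_Phi0)
  next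
    case (Suc k)
    have "(norm (Phid k *v x))\<^sup>2 \<ge> (norm x)\<^sup>2" by (rule order_trans[OF Suc.prems Pstep'[of k x]])
    then have IH: "Phid k *v x = x" "\<forall>j<k. \<phi>d j \<bullet> x = 0" using Suc.IH by auto
    have aux2: "\<And>A B C::real. A \<le> B - C \<Longrightarrow> B \<le> A \<Longrightarrow> C \<le> 0" by linarith
    have "cc k * (\<phi>d k \<bullet> x)\<^sup>2 \<le> 0" by (rule aux2[OF Pstep[of k x, unfolded IH(1)] Suc.prems])
    then have "(\<phi>d k \<bullet> x)\<^sup>2 \<le> 0" using ccpos[of k] by (simp add: mult_le_0_iff)
    then have z: "\<phi>d k \<bullet> x = 0" by simp
    have "Phid (Suc k) *v x = x" unfolding PhiS matrix_vector_mul_assoc[symmetric] IH(1) Gv z by simp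
    then show ?case using IH(2) z less_Suc_eq by auto
  qed
  obtain \<tau> :: "'q \<Rightarrow> nat" where tau: "rank (\<chi> i j. \<phi>d (\<tau> j) $ i) = CARD('q)" using dt_ident by blast
  define K where "K = Suc (Max (range \<tau>))"
  have tauK: "\<tau> j < K" for j unfolding K_def by (simp add: le_imp_less_Suc)
  have strict: "norm (Phid K *v x) < norm x" if "x \<noteq> 0" for x
  proof (rule ccontr)
    assume "\<not> norm (Phid K *v x) < norm x"
    then have "(norm (Phid K *v x))\<^sup>2 \<ge> (norm x)\<^sup>2" by (metis norm_ge_zero not_less power_mono)
    then have "\<forall>j<K. \<phi>d j \<bullet> x = 0" using eqcase by blast
    then have "x = 0" using ident_zero[of \<phi>d \<tau>, OF tau] tauK by blast
    then show False using that by simp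
  qed
  obtain \<rho> where rho: "0 \<le> \<rho>" "\<rho> < 1" "\<forall>x. norm (Phid K *v x) \<le> \<rho> * norm x"
    using contr_rho[OF strict] by blast
  obtain \<delta> where delta: "\<delta> > 0" "\<forall>M::real^'q^'q. (\<forall>x. norm (M *v x) \<le> \<rho> * norm x) \<longrightarrow> \<delta> \<le> \<bar>det (mat 1 - M)\<bar>"
    using det_bound[OF rho(1,2)] by blast
  have Dlow: "\<delta> \<le> \<bar>\<Delta> k\<bar>" if "K \<le> k" for k
  proof -
    have "\<forall>x. norm (Phid k *v x) \<le> \<rho> * norm x"
    proof
      fix x show "norm (Phid k *v x) \<le> \<rho> * norm x"
        by (rule order_trans[OF Pmono'[OF that] rho(3)[rule_format]])
    qed
    then show ?thesis using delta(2) unfolding \<Delta>_def by blast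
  qed
  define a where "a = \<gamma> / (\<gamma> + \<delta>\<^sup>2)"
  have a: "0 < a" "a < 1" unfolding a_def using gamma_pos delta(1) by (auto simp: add_pos_pos)
  have late_step: "norm (Thd (Suc k) - \<theta>) \<le> a * norm (Thd k - \<theta>)" if "K \<le> k" for k
  proof -
    have "\<delta>\<^sup>2 \<le> (\<Delta> k)\<^sup>2" using power_mono[OF Dlow[OF that], of 2] delta(1) by simp
    then have "\<gamma> / (\<gamma> + (\<Delta> k)\<^sup>2) \<le> a" unfolding a_def using gamma_pos
      by (intro divide_left_mono) (auto simp: add_pos_nonneg)
    moreover have nn: "\<gamma> / (\<gamma> + (\<Delta> k)\<^sup>2) \<ge> 0" using gamma_pos posk[of k] by simp
    moreover have "norm (Thd (Suc k) - \<theta>) = (\<gamma> / (\<gamma> + (\<Delta> k)\<^sup>2)) * norm (Thd k - \<theta>)"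
      unfolding ThS by (simp only: norm_scaleR abs_of_nonneg[OF nn])
    ultimately show ?thesis by (metis mult_right_mono norm_ge_zero)
  qed
  have late: "norm (Thd (K + m) - \<theta>) \<le> norm (\<theta>0 - \<theta>) * a ^ m" for m
  proof (induction m)
    case 0 then show ?case using Thall by simp
  next
    case (Suc m)
    have "norm (Thd (K + Suc m) - \<theta>) \<le> a * norm (Thd (K + m) - \<theta>)" using late_step[of "K + m"] by simp
    also have "\<dots> \<le> a * (norm (\<theta>0 - \<theta>) * a ^ m)" using Suc a by (simp add: mult_left_mono)
    finally show ?case by (simp add: algebra_simps)
  qed
  show ?thesis
    by (rule exp_decay_final[OF a _ Thall late]) simp
qed

theorem proposition2:
  fixes \<theta> \<theta>g0 \<theta>0 :: "real^'q" and \<gamma> :: real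
    \<comment> \<open>continuous-time data\<close>
    and \<phi> :: "real \<Rightarrow> real^'q" and \<gamma>g :: "real \<Rightarrow> real"
    and thg Th :: "real \<Rightarrow> real^'q" and Phi :: "real \<Rightarrow> real^'q^'q"
    \<comment> \<open>discrete-time data\<close>
    and \<phi>d :: "nat \<Rightarrow> real^'q" and \<gamma>gd :: "nat \<Rightarrow> real"
    and thgd Thd :: "nat \<Rightarrow> real^'q" and Phid :: "nat \<Rightarrow> real^'q^'q"
  assumes gamma_pos: "\<gamma> > 0"
    \<comment> \<open>CT hypotheses\<close>
    and ct_gg_pos: "\<And>t. t \<ge> 0 \<Longrightarrow> \<gamma>g t > 0"
    and ct_gg_cont: "continuous_on {0..} \<gamma>g"
    and ct_phi_cont: "continuous_on {0..} \<phi>"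
    and ct_phi_bdd: "bounded (\<phi> ` {0..})"
    and ct_thg: "\<And>t. t \<ge> 0 \<Longrightarrow> (thg has_vector_derivative
          (- (\<gamma>g t *\<^sub>R (outer (\<phi> t) (\<phi> t) *v thg t)) + (\<gamma>g t * (\<phi> t \<bullet> \<theta>)) *\<^sub>R \<phi> t))
          (at t within {0..})"
    and ct_thg0: "thg 0 = \<theta>g0"
    and ct_Phi: "\<And>t. t \<ge> 0 \<Longrightarrow> (Phi has_vector_derivative
          (- (\<gamma>g t *\<^sub>R (outer (\<phi> t) (\<phi> t) ** Phi t)))) (at t within {0..})"
    and ct_Phi0: "Phi 0 = mat 1"
    and ct_Th: "\<And>t. t \<ge> 0 \<Longrightarrow> (Th has_vector_derivative
          (\<gamma> * det (mat 1 - Phi t)) *\<^sub>R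
            (adjugate (mat 1 - Phi t) *v (thg t - Phi t *v \<theta>g0)
             - det (mat 1 - Phi t) *\<^sub>R Th t)) (at t within {0..})"
    and ct_Th0: "Th 0 = \<theta>0"
    and ct_ident: "\<exists>\<tau> :: 'q \<Rightarrow> real. (\<forall>i. \<tau> i > 0) \<and>
          rank (\<chi> i j. \<phi> (\<tau> j) $ i) = CARD('q)"
    \<comment> \<open>DT hypotheses\<close>
    and dt_gg_pos: "\<And>k. \<gamma>gd k > 0"
    and dt_phi_bdd: "bounded (range \<phi>d)"
    and dt_thg: "\<And>k. thgd (Suc k) =
          (mat 1 - (1 / (\<gamma>gd k + (norm (\<phi>d k))\<^sup>2)) *\<^sub>R outer (\<phi>d k) (\<phi>d k)) *v thgd k
          + ((1 / (\<gamma>gd k + (norm (\<phi>d k))\<^sup>2)) * (\<phi>d k \<bullet> \<theta>)) *\<^sub>R \<phi>d k"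
    and dt_thg0: "thgd 0 = \<theta>g0"
    and dt_Phi: "\<And>k. Phid (Suc k) =
          (mat 1 - (1 / (\<gamma>gd k + (norm (\<phi>d k))\<^sup>2)) *\<^sub>R outer (\<phi>d k) (\<phi>d k)) ** Phid k"
    and dt_Phi0: "Phid 0 = mat 1"
    and dt_Th: "\<And>k. Thd (Suc k) = Thd k +
          (det (mat 1 - Phid k) / (\<gamma> + (det (mat 1 - Phid k))\<^sup>2)) *\<^sub>R
            (adjugate (mat 1 - Phid k) *v (thgd k - Phid k *v \<theta>g0)
             - det (mat 1 - Phid k) *\<^sub>R Thd k)"
    and dt_Th0: "Thd 0 = \<theta>0"
    and dt_ident: "\<exists>\<tau> :: 'q \<Rightarrow> nat. rank (\<chi> i j. \<phi>d (\<tau> j) $ i) = CARD('q)"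
  shows "(\<exists>c r. r > 0 \<and> (\<forall>t\<ge>0. norm (Th t - \<theta>) \<le> c * exp (- r * t)))
       \<and> (\<exists>c r. r > 0 \<and> (\<forall>k. norm (Thd k - \<theta>) \<le> c * exp (- r * real k)))"
    using ct_part[OF gamma_pos ct_gg_pos ct_thg ct_thg0 ct_Phi ct_Phi0 ct_Th ct_Th0 ct_ident]
    dt_part[OF gamma_pos dt_gg_pos dt_thg dt_thg0 dt_Phi dt_Phi0 dt_Th dt_Th0 dt_ident]
  by blast

end
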